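(* Let $N\ge1$, let $n\ge m$ be positive integers and $\kappa>0$. Let $\{(U_j,V_j)\}_{j=1}^N$ be a solution of the homogeneous double special orthogonal matrix model $$\dot U_j=\frac{\kappa}{N}\sum_{k=1}^N\langle V_j,V_k\rangle_F\,(U_k-U_jU_k^\top U_j),\qquad \dot V_j=\frac{\kappa}{N}\sum_{k=1}^N\langle U_j,U_k\rangle_F\,(V_k-V_jV_k^\top V_j),$$ with $(U_j,V_j)(0)=(U_j^0,V_j^0)\in\mathbf{SO}(n)\times\mathbf{SO}(m)$. Suppose $$\mathcal L(0)<\alpha_{m,n}:=\frac{-(12n+27)+\sqrt{(12n+27)^2+24m(3n+4)}}{4(4n+3)}.$$ Then $\lim_{t\to\infty}\mathcal L(t)=0$.
   Context: For real matrices, $\langle A,B\rangle_F=\mathrm{tr}(A^\top B)$ and $\|A\|_F=\sqrt{\langle A,A\rangle_F}$. $\mathbf{SO}(n)$ is the special orthogonal group. For a solution, set $d_{ij}=\langle U_i,U_j\rangle_F$, $c_{ij}=\langle V_i,V_j\rangle_F$, $\mathcal D(\mathcal U)=\max_{i,j}\|U_i-U_j\|_F$, $\mathcal D(\mathcal V)=\max_{i,j}\|V_i-V_j\|_F$, $\mathcal S(\mathcal U)=\max_{i,j}|n-d_{ij}|$, $\mathcal S(\mathcal V)=\max_{i,j}|m-c_{ij}|$, and $\mathcal L=\mathcal D(\mathcal U)+\mathcal D(\mathcal V)+\mathcal S(\mathcal U)+\mathcal S(\mathcal V)$. *)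

theory Defs
  imports "HOL-Analysis.Analysis"
begin

definition frob_inner :: "real^'n::finite^'n \<Rightarrow> real^'n^'n \<Rightarrow> real" where
  "frob_inner A B = trace (transpose A ** B)"

definition frob_norm :: "real^'n::finite^'n \<Rightarrow> real" where
  "frob_norm A = sqrt (frob_inner A A)"

definition SO_mat :: "real^'n::finite^'n \<Rightarrow> bool" where
  "SO_mat A \<longleftrightarrow> orthogonal_matrix A \<and> det A = 1"

definition DSOM_solution ::
  "real \<Rightarrow> ('k::finite \<Rightarrow> real \<Rightarrow> real^'n::finite^'n) \<Rightarrow> ('k \<Rightarrow> real \<Rightarrow> real^'m::finite^'m) \<Rightarrow> bool" where
  "DSOM_solution \<kappa> U V \<longleftrightarrow>
     (\<forall>j. \<forall>t\<ge>0.
        (U j has_vector_derivative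
           ((\<kappa> / real CARD('k)) *\<^sub>R
              (\<Sum>k\<in>UNIV. frob_inner (V j t) (V k t) *\<^sub>R
                   (U k t - U j t ** transpose (U k t) ** U j t)))) (at t within {0..})
      \<and> (V j has_vector_derivative
           ((\<kappa> / real CARD('k)) *\<^sub>R
              (\<Sum>k\<in>UNIV. frob_inner (U j t) (U k t) *\<^sub>R
                   (V k t - V j t ** transpose (V k t) ** V j t)))) (at t within {0..}))"

definition diamD :: "('k::finite \<Rightarrow> real^'n::finite^'n) \<Rightarrow> real" where
  "diamD U = Max {frob_norm (U i - U j) | i j. True}"

definition devS :: "('k::finite \<Rightarrow> real^'n::finite^'n) \<Rightarrow> real" where
  "devS U = Max {\<bar>real CARD('n) - frob_inner (U i) (U j)\<bar> | i j. True}"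

definition lyapL ::
  "('k::finite \<Rightarrow> real \<Rightarrow> real^'n::finite^'n) \<Rightarrow> ('k \<Rightarrow> real \<Rightarrow> real^'m::finite^'m) \<Rightarrow> real \<Rightarrow> real" where
  "lyapL U V t = diamD (\<lambda>j. U j t) + diamD (\<lambda>j. V j t) + devS (\<lambda>j. U j t) + devS (\<lambda>j. V j t)"

definition alpha_mn :: "real \<Rightarrow> real \<Rightarrow> real" where
  "alpha_mn m n = (-(12*n+27) + sqrt ((12*n+27)^2 + 24*m*(3*n+4))) / (4*(4*n+3))"

end

theory Submission
  imports Defs
begin

lemma transpose_add: "transpose (A + B) = transpose A + transpose (B::real^'n^'m)"
  by (simp add: transpose_def vec_eq_iff)
lemma transpose_diff: "transpose (A - B) = transpose A - transpose (B::real^'n^'m)"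
  by (simp add: transpose_def vec_eq_iff)
lemma transpose_zero: "transpose (0::real^'n^'m) = 0"
  by (simp add: transpose_def vec_eq_iff)
lemma matrix_add_rdistrib: "((A + B) ** C) = (A ** C) + (B ** (C::real^'p^'n))"
  by (vector matrix_matrix_mult_def sum.distrib[symmetric] field_simps)
lemma matrix_sub_ldistrib: "(A ** (B - C)) = (A ** B) - (A ** (C::real^'p^'n))"
  by (vector matrix_matrix_mult_def sum_subtractf[symmetric] field_simps)
lemma matrix_sub_rdistrib: "((A - B) ** C) = (A ** C) - (B ** (C::real^'p^'n))"
  by (vector matrix_matrix_mult_def sum_subtractf[symmetric] field_simps)

lemma inner_mat_def: "inner (A::real^'n^'m) B = (\<Sum>i\<in>UNIV. \<Sum>j\<in>UNIV. A$i$j * B$i$j)"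
  by (simp add: inner_vec_def)

lemma frob_inner_eq: "frob_inner A B = inner A B"
  unfolding frob_inner_def trace_def inner_mat_def matrix_matrix_mult_def transpose_def
  apply simp
  apply (rule sum.swap)
  done

lemma frob_norm_eq: "frob_norm A = norm A"
  by (simp add: frob_norm_def frob_inner_eq norm_eq_sqrt_inner)

lemma inner_mult_right: "inner ((A::real^'n^'m) ** B) (C::real^'p^'m) = inner A (C ** transpose B)"
  unfolding inner_mat_def matrix_matrix_mult_def transpose_def
  apply (simp add: sum_distrib_left sum_distrib_right mult_ac)
  apply (rule sum.cong[OF refl])
  apply (rule sum.swap)
  done

lemma inner_transpose: "inner (transpose (A::real^'n^'m)) (transpose B) = inner A B"
  unfolding inner_mat_def transpose_def
  apply simp
  apply (rule sum.swap)
  done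

lemma inner_mult_left: "inner ((A::real^'n^'m) ** B) (C::real^'p^'m) = inner B (transpose A ** C)"
proof -
  have "inner (A ** B) C = inner (transpose (A ** B)) (transpose C)" by (simp add: inner_transpose)
  also have "\<dots> = inner (transpose B ** transpose A) (transpose C)" by (simp add: matrix_transpose_mul)
  also have "\<dots> = inner (transpose B) (transpose C ** A)" by (simp add: inner_mult_right)
  also have "\<dots> = inner (transpose B) (transpose (transpose A ** C))" by (simp add: matrix_transpose_mul)
  also have "\<dots> = inner B (transpose A ** C)" by (simp add: inner_transpose)
  finally show ?thesis .
qed

lemma norm_transpose: "norm (transpose (A::real^'n^'m)) = norm A"
  by (simp add: norm_eq_sqrt_inner inner_transpose)

lemma mat_entry_inner: "((A::real^'n^'m) ** B)$i$j = inner (A$i) ((transpose B)$j)"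
  by (simp add: matrix_matrix_mult_def transpose_def inner_vec_def)

lemma inner_sq_sum: "inner (A::real^'n^'m) A = (\<Sum>i\<in>UNIV. inner (A$i) (A$i))"
  by (simp add: inner_vec_def)

lemma norm_mult_le: "norm ((A::real^'n^'m) ** (B::real^'p^'n)) \<le> norm A * norm B"
proof -
  have "(norm (A ** B))^2 = (\<Sum>i\<in>UNIV. \<Sum>j\<in>UNIV. ((A ** B)$i$j)^2)"
    unfolding power2_norm_eq_inner by (simp add: inner_mat_def power2_eq_square)
  also have "\<dots> = (\<Sum>i\<in>UNIV. \<Sum>j\<in>UNIV. (inner (A$i) ((transpose B)$j))^2)"
    by (simp only: mat_entry_inner)
  also have "\<dots> \<le> (\<Sum>i\<in>UNIV. \<Sum>j\<in>UNIV. inner (A$i) (A$i) * inner ((transpose B)$j) ((transpose B)$j))"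
    by (intro sum_mono Cauchy_Schwarz_ineq)
  also have "\<dots> = inner A A * inner (transpose B) (transpose B)"
    unfolding inner_sq_sum[of A] inner_sq_sum[of "transpose B"] sum_product by simp
  also have "\<dots> = (norm A * norm B)^2"
    by (simp only: norm_transpose power_mult_distrib flip: power2_norm_eq_inner)
  finally show ?thesis
    by (rule power2_le_imp_le) simp
qed

lemma orth_tt: "orthogonal_matrix Q \<Longrightarrow> transpose Q ** Q = mat 1"
  by (simp add: orthogonal_matrix_def)
lemma orth_tt2: "orthogonal_matrix Q \<Longrightarrow> Q ** transpose Q = mat 1"
  by (simp add: orthogonal_matrix_def)

lemma orth_norm_left: "orthogonal_matrix (Q::real^'n^'n) \<Longrightarrow> norm (Q ** (A::real^'p^'n)) = norm A"
proof -
  assume o: "orthogonal_matrix Q"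
  have "inner (Q ** A) (Q ** A) = inner A (transpose Q ** (Q ** A))" by (simp add: inner_mult_left)
  also have "\<dots> = inner A A" using o by (simp add: matrix_mul_assoc orth_tt)
  finally show ?thesis by (simp add: norm_eq_sqrt_inner)
qed

lemma orth_norm_right: "orthogonal_matrix (Q::real^'n^'n) \<Longrightarrow> norm ((A::real^'n^'p) ** Q) = norm A"
proof -
  assume o: "orthogonal_matrix Q"
  have "inner (A ** Q) (A ** Q) = inner A ((A ** Q) ** transpose Q)" by (simp add: inner_mult_right)
  also have "\<dots> = inner A A" using o by (simp flip: matrix_mul_assoc add: orth_tt2)
  finally show ?thesis by (simp add: norm_eq_sqrt_inner)
qed

lemma inner_mat1: "inner (A::real^'n^'n) (mat 1) = trace A"
  unfolding inner_mat_def mat_def trace_def by (simp add: if_distrib cong: if_cong)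

lemma inner_skew_mat1: "inner ((A::real^'n^'n) - transpose A) (mat 1) = 0"
  unfolding inner_mat1 trace_def transpose_def by (simp add: sum_subtractf)

lemma inner_mat1_mat1: "inner (mat 1 :: real^'n^'n) (mat 1) = real CARD('n)"
  by (simp add: inner_mat1 trace_I)

lemma orth_inner_self: "orthogonal_matrix (Q::real^'n^'n) \<Longrightarrow> inner Q Q = real CARD('n)"
proof -
  assume o: "orthogonal_matrix Q"
  have "inner Q Q = inner (Q ** mat 1) Q" by simp
  also have "\<dots> = inner (mat 1) (transpose Q ** Q)" by (rule inner_mult_left)
  also have "\<dots> = real CARD('n)" using o by (simp add: orth_tt inner_mat1_mat1)
  finally show ?thesis .
qed

lemma orth_norm_sq: "orthogonal_matrix (Q::real^'n^'n) \<Longrightarrow> (norm Q)^2 = real CARD('n)"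
  by (simp add: power2_norm_eq_inner orth_inner_self)

lemma orth_dist: "orthogonal_matrix (P::real^'n^'n) \<Longrightarrow> orthogonal_matrix Q \<Longrightarrow>
   (norm (P - Q))^2 = 2 * real CARD('n) - 2 * inner P Q"
  by (simp add: power2_norm_eq_inner inner_diff_left inner_diff_right orth_inner_self inner_commute)

lemma inner_T_self:
  assumes "orthogonal_matrix (Xi::real^'n^'n)"
  shows "inner Xi (Xk - Xi ** transpose Xk ** Xi) = 0"
proof -
  have "inner Xi (Xi ** transpose Xk ** Xi) = inner (Xi ** transpose Xk ** Xi) Xi" by (simp add: inner_commute)
  also have "\<dots> = inner (Xi ** transpose Xk) (Xi ** transpose Xi)" by (rule inner_mult_right)
  also have "\<dots> = inner (Xi ** transpose Xk) (mat 1)" using assms by (simp add: orth_tt2)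
  also have "\<dots> = inner (transpose Xk) (transpose Xi ** mat 1)" by (rule inner_mult_left)
  also have "\<dots> = inner Xk Xi" by (metis inner_transpose matrix_mul_rid)
  finally show ?thesis by (simp add: inner_diff_right inner_commute)
qed

lemma inner_ABA: "inner ((A::real^'n^'n) ** transpose B ** A) C = inner (A ** transpose C ** A) B"
proof -
  have "inner (A ** transpose B ** A) C = inner (A ** transpose B) (C ** transpose A)" by (rule inner_mult_right)
  also have "\<dots> = inner (transpose B) (transpose A ** (C ** transpose A))" by (rule inner_mult_left)
  also have "\<dots> = inner B (transpose (transpose A ** (C ** transpose A)))"
    by (metis inner_transpose transpose_transpose)
  also have "transpose (transpose A ** (C ** transpose A)) = A ** transpose C ** A"
    by (simp add: matrix_transpose_mul matrix_mul_assoc)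
  finally show ?thesis by (simp add: inner_commute)
qed

lemma inner_Tj:
  assumes "orthogonal_matrix (Xj::real^'n^'n)"
  shows "inner Xi (Xk - Xj ** transpose Xk ** Xj)
     = inner (Xj ** (transpose Xj ** Xi - transpose Xi ** Xj)) Xk"
proof -
  have "Xj ** (transpose Xj ** Xi - transpose Xi ** Xj) = Xi - Xj ** transpose Xi ** Xj"
    using assms by (simp add: matrix_sub_ldistrib matrix_mul_assoc orth_tt2)
  then show ?thesis
    using inner_ABA[of Xj Xi Xk] by (simp add: inner_diff_left inner_diff_right) (metis inner_commute)
qed

lemma inner_Ti:
  assumes "orthogonal_matrix (Xi::real^'n^'n)"
  shows "inner Xj (Xk - Xi ** transpose Xk ** Xi)
     = - inner (Xi ** (transpose Xj ** Xi - transpose Xi ** Xj)) Xk"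
proof -
  have "Xi ** (transpose Xj ** Xi - transpose Xi ** Xj) = Xi ** transpose Xj ** Xi - Xj"
    using assms by (simp add: matrix_sub_ldistrib matrix_mul_assoc orth_tt2)
  then show ?thesis
    using inner_ABA[of Xi Xj Xk] by (simp add: inner_diff_left inner_diff_right) (metis inner_commute)
qed

lemma inner_XiZ_Xi:
  assumes "orthogonal_matrix (Xi::real^'n^'n)"
  shows "inner (Xi ** (transpose Xj ** Xi - transpose Xi ** Xj)) Xi = 0"
proof -
  have "inner (Xi ** (transpose Xj ** Xi - transpose Xi ** Xj)) Xi
      = inner (transpose Xj ** Xi - transpose Xi ** Xj) (transpose Xi ** Xi)" by (rule inner_mult_left)
  also have "\<dots> = inner (transpose Xj ** Xi - transpose (transpose Xj ** Xi)) (mat 1)"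
    using assms by (simp add: orth_tt matrix_transpose_mul)
  also have "\<dots> = 0" by (rule inner_skew_mat1)
  finally show ?thesis .
qed

lemma inner_XjZ_Xi:
  assumes "orthogonal_matrix (Xj::real^'n^'n)"
  shows "inner (Xj ** (transpose Xj ** Xi - transpose Xi ** Xj)) Xi
     = (norm (transpose Xj ** Xi - transpose Xi ** Xj))^2 / 2"
proof -
  define P where "P = transpose Xj ** Xi"
  have tP: "transpose Xi ** Xj = transpose P" by (simp add: P_def matrix_transpose_mul)
  have "inner (Xj ** (transpose Xj ** Xi - transpose Xi ** Xj)) Xi
      = inner (P - transpose P) P" by (simp add: inner_mult_left tP P_def)
  also have "\<dots> = (norm (P - transpose P))^2 / 2"
    by (simp add: power2_norm_eq_inner inner_diff_left inner_diff_right inner_transpose inner_commute)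
  finally show ?thesis by (simp add: tP P_def)
qed

lemma Z_lower:
  assumes oi: "orthogonal_matrix (Xi::real^'n^'n)" and oj: "orthogonal_matrix Xj"
  shows "(norm (transpose Xj ** Xi - transpose Xi ** Xj))^2 \<ge> 4 * (norm (Xi - Xj))^2 - (norm (Xi - Xj))^4"
proof -
  define P where "P = transpose Xj ** Xi"
  define E where "E = P - mat 1"
  have tP: "transpose Xi ** Xj = transpose P" by (simp add: P_def matrix_transpose_mul)
  have PP: "transpose P ** P = mat 1"
    using oi oj by (simp add: P_def matrix_transpose_mul matrix_mul_assoc)
      (metis matrix_mul_assoc matrix_mul_lid orth_tt orth_tt2)
  have E1: "E = transpose Xj ** (Xi - Xj)"
    using oj by (simp add: E_def P_def matrix_sub_ldistrib orth_tt)
  have nE: "norm E = norm (Xi - Xj)"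
    using oj by (simp add: E1 orth_norm_left)
  have nEt: "norm (transpose E) = norm (Xi - Xj)" by (simp add: norm_transpose nE)
  have Zeq: "transpose Xj ** Xi - transpose Xi ** Xj = E - transpose E"
    by (simp add: tP E_def P_def transpose_diff)
  have EE: "E + transpose E = - (transpose E ** E)"
    using PP by (simp add: E_def transpose_diff matrix_sub_ldistrib matrix_sub_rdistrib)
  have par: "(norm (E - transpose E))^2 + (norm (E + transpose E))^2 = 4 * (norm (Xi - Xj))^2"
  proof -
    have "(norm (E - transpose E))^2 + (norm (E + transpose E))^2 = 2 * (norm E)^2 + 2 * (norm (transpose E))^2"
      by (simp add: power2_norm_eq_inner inner_diff_left inner_diff_right inner_add_left inner_add_right inner_commute)
    then show ?thesis using nE nEt by simp
  qed
  have "norm (E + transpose E) \<le> (norm (Xi - Xj))^2"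
    using norm_mult_le[of "transpose E" E] nE nEt by (simp add: EE power2_eq_square)
  then have "(norm (E + transpose E))^2 \<le> (norm (Xi - Xj))^4"
    by (metis norm_ge_zero power_mono power2_eq_square power_mult numeral_Bit0 mult_2 power_add)
  then show ?thesis using par Zeq by simp
qed

lemma perk:
  fixes Xi Xj Xk :: "real^'n^'n"
  assumes oi: "orthogonal_matrix Xi" and oj: "orthogonal_matrix Xj" and ok: "orthogonal_matrix Xk"
    and mk: "norm (Xk - Xi) \<le> norm (Xi - Xj)" and r5: "norm (Xi - Xj) \<le> 1/5"
    and cj: "cj \<ge> 49/50" and cji: "\<bar>cj - ci\<bar> \<le> 3/50"
  shows "cj * inner Xi (Xk - Xj ** transpose Xk ** Xj) + ci * inner Xj (Xk - Xi ** transpose Xk ** Xi)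
          \<ge> (norm (Xi - Xj))^2"
proof -
  define Z where "Z = transpose Xj ** Xi - transpose Xi ** Xj"
  define r where "r = norm (Xi - Xj)"
  define z where "z = norm Z"
  define w where "w = inner ((Xj - Xi) ** Z) (Xk - Xi)"
  define y where "y = inner (Xi ** Z) (Xk - Xi)"
  have r0: "r \<ge> 0" by (simp add: r_def)
  have z0: "z \<ge> 0" by (simp add: z_def)
  have L: "cj * inner Xi (Xk - Xj ** transpose Xk ** Xj) + ci * inner Xj (Xk - Xi ** transpose Xk ** Xi)
        = cj * inner (Xj ** Z) Xk - ci * inner (Xi ** Z) Xk"
    using inner_Tj[OF oj, of Xi Xk] inner_Ti[OF oi, of Xj Xk] by (simp add: Z_def)
  have v: "inner (Xi ** Z) Xk = y"
    using inner_XiZ_Xi[OF oi, of Xj] by (simp add: y_def Z_def inner_diff_right)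
  have u: "inner (Xj ** Z) Xk = z^2/2 + w + y"
  proof -
    have "inner (Xj ** Z) Xk = inner ((Xj - Xi) ** Z) Xk + inner (Xi ** Z) Xk"
      by (simp add: matrix_sub_rdistrib inner_diff_left)
    also have "inner ((Xj - Xi) ** Z) Xk = inner ((Xj - Xi) ** Z) Xi + w"
      by (simp add: w_def inner_diff_right)
    also have "inner ((Xj - Xi) ** Z) Xi = z^2/2"
      using inner_XiZ_Xi[OF oi, of Xj] inner_XjZ_Xi[OF oj, of Xi]
      by (simp add: matrix_sub_rdistrib inner_diff_left Z_def z_def)
    finally show ?thesis using v by simp
  qed
  have wb: "\<bar>w\<bar> \<le> r * z * r"
  proof -
    have "\<bar>w\<bar> \<le> norm ((Xj - Xi) ** Z) * norm (Xk - Xi)" unfolding w_def by (rule Cauchy_Schwarz_ineq2)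
    also have "\<dots> \<le> (r * z) * r"
    proof (rule mult_mono)
      show "norm ((Xj - Xi) ** Z) \<le> r * z"
        using norm_mult_le[of "Xj - Xi" Z] by (simp add: r_def z_def norm_minus_commute)
    qed (use mk r_def r0 z0 in auto)
    finally show ?thesis .
  qed
  have yb: "\<bar>y\<bar> \<le> z * r"
  proof -
    have "\<bar>y\<bar> \<le> norm (Xi ** Z) * norm (Xk - Xi)" unfolding y_def by (rule Cauchy_Schwarz_ineq2)
    also have "\<dots> \<le> z * r" using orth_norm_left[OF oi, of Z] mk by (simp add: z_def r_def mult_left_mono)
    finally show ?thesis .
  qed
  have zsq: "z^2 \<ge> 4 * r^2 - r^4"
    using Z_lower[OF oi oj] by (simp add: z_def r_def Z_def)
  have "r^4 \<le> r^2 / 25"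
  proof -
    have "r^2 \<le> (1/5)^2" using r5 r0 unfolding r_def by (intro power_mono) auto
    then have "r^2 \<le> 1/25" by (simp add: power2_eq_square)
    then have "r^2 * r^2 \<le> r^2 * (1/25)" by (intro mult_left_mono) auto
    then show ?thesis by (simp add: power4_eq_xxxx power2_eq_square)
  qed
  moreover have "(99/50 * r)^2 = 9801/2500 * r^2" by (simp add: power2_eq_square)
  moreover have "r^2 \<ge> 0" by simp
  ultimately have "z^2 \<ge> (99/50 * r)^2" using zsq by linarith
  then have zr: "z \<ge> 99/50 * r" using z0 r0 by (meson power2_le_imp_le)
  have A2: "z/2 - r^2 \<ge> 79/100 * r"
  proof -
    have "r * r \<le> r * (1/5)" using r5 r0 unfolding r_def by (intro mult_left_mono) auto
    then have "r^2 \<le> r/5" by (simp add: power2_eq_square)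
    then show ?thesis using zr by simp
  qed
  have A3: "z^2/2 - r^2 * z \<ge> z * (79/100 * r)"
  proof -
    have "z^2/2 - r^2 * z = z * (z/2 - r^2)" by (simp add: power2_eq_square algebra_simps)
    also have "\<dots> \<ge> z * (79/100 * r)" using A2 z0 by (intro mult_left_mono)
    finally show ?thesis .
  qed
  have A1: "z^2/2 + w \<ge> z^2/2 - r^2 * z" using wb by (simp add: power2_eq_square abs_le_iff mult_ac)
  have zr0: "z * (79/100 * r) \<ge> 0" using z0 r0 by simp
  have A4: "cj * (z^2/2 + w) \<ge> 49/50 * (z * (79/100 * r))"
    using A1 A3 zr0 cj by (intro mult_mono) auto
  have A5: "(cj - ci) * y \<ge> - (3/50 * (z * r))"
  proof -
    have "\<bar>(cj - ci) * y\<bar> \<le> 3/50 * (z * r)" unfolding abs_mult using cji yb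
      by (intro mult_mono) auto
    then show ?thesis by (simp add: abs_le_iff)
  qed
  have "cj * inner (Xj ** Z) Xk - ci * inner (Xi ** Z) Xk = cj * (z^2/2 + w) + (cj - ci) * y"
    using u v by (simp add: algebra_simps)
  also have "\<dots> \<ge> 49/50 * (z * (79/100 * r)) - 3/50 * (z * r)" using A4 A5 by linarith
  also have "49/50 * (z * (79/100 * r)) - 3/50 * (z * r) = 3571/5000 * (z * r)" by (simp add: algebra_simps)
  finally have F: "cj * inner (Xj ** Z) Xk - ci * inner (Xi ** Z) Xk \<ge> 3571/5000 * (z * r)" .
  have "z * r \<ge> (99/50 * r) * r" using zr r0 by (intro mult_right_mono)
  then have "3571/5000 * (z * r) \<ge> 3571/5000 * (99/50 * r * r)" by linarith
  moreover have "3571/5000 * (99/50 * r * r) \<ge> r^2" using r0 by (simp add: power2_eq_square)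
  ultimately show ?thesis using F L by (simp add: r_def)
qed

lemma coef_bounds:
  fixes Y :: "'k \<Rightarrow> real^'m^'m"
  assumes oY: "\<And>k. orthogonal_matrix (Y k)" and y5: "\<And>k l. norm (Y k - Y l) \<le> 1/5"
  shows "inner (Y j) (Y k) \<ge> 49/50" and "\<bar>inner (Y j) (Y k) - inner (Y i) (Y k)\<bar> \<le> 3/50"
proof -
  have sq: "(norm (Y a - Y b))^2 \<le> 1/25" for a b
  proof -
    have "(norm (Y a - Y b))^2 \<le> (1/5)^2" using y5[of a b] by (intro power_mono) auto
    then show ?thesis by (simp add: power2_eq_square)
  qed
  have m1: "real CARD('m) \<ge> 1" by simp
  have cY: "inner (Y a) (Y b) = real CARD('m) - (norm (Y a - Y b))^2 / 2" for a b
    using orth_dist[OF oY[of a] oY[of b]] by linarith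
  show "inner (Y j) (Y k) \<ge> 49/50" using cY[of j k] sq[of j k] m1 by linarith
  have e1: "inner (Y j) (Y k) - inner (Y i) (Y k) = inner (Y j - Y i) (Y k - Y i) + inner (Y j - Y i) (Y i)"
    by (simp add: inner_diff_left inner_diff_right)
  have e2: "inner (Y j - Y i) (Y i) = -((norm (Y j - Y i))^2 / 2)"
    using cY[of j i] orth_inner_self[OF oY[of i]] by (simp add: inner_diff_left)
  have e: "inner (Y j) (Y k) - inner (Y i) (Y k) = inner (Y j - Y i) (Y k - Y i) - (norm (Y j - Y i))^2 / 2"
    using e1 e2 by simp
  have "\<bar>inner (Y j - Y i) (Y k - Y i)\<bar> \<le> norm (Y j - Y i) * norm (Y k - Y i)" by (rule Cauchy_Schwarz_ineq2)
  also have "\<dots> \<le> (1/5) * (1/5)" using y5 by (intro mult_mono) auto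
  finally have "\<bar>inner (Y j - Y i) (Y k - Y i)\<bar> \<le> 1/25" by simp
  then show "\<bar>inner (Y j) (Y k) - inner (Y i) (Y k)\<bar> \<le> 3/50"
  proof -
    have "(norm (Y j - Y i))^2 \<ge> 0" by simp
    then show ?thesis using e sq[of j i] \<open>\<bar>inner (Y j - Y i) (Y k - Y i)\<bar> \<le> 1/25\<close>
      unfolding e by (simp only: abs_le_iff) linarith
  qed
qed

lemma key:
  fixes X :: "'k::finite \<Rightarrow> real^'n^'n" and Y :: "'k \<Rightarrow> real^'m^'m" and \<kappa> :: real
  assumes oX: "\<And>k. orthogonal_matrix (X k)" and oY: "\<And>k. orthogonal_matrix (Y k)"
    and kp: "\<kappa> > 0"
    and mx: "\<And>k. norm (X k - X i) \<le> norm (X i - X j)"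
    and r5: "norm (X i - X j) \<le> 1/5"
    and y5: "\<And>k l. norm (Y k - Y l) \<le> 1/5"
  shows "inner (X i - X j)
      ((\<kappa> / real CARD('k)) *\<^sub>R (\<Sum>k\<in>UNIV. inner (Y i) (Y k) *\<^sub>R (X k - X i ** transpose (X k) ** X i))
     - (\<kappa> / real CARD('k)) *\<^sub>R (\<Sum>k\<in>UNIV. inner (Y j) (Y k) *\<^sub>R (X k - X j ** transpose (X k) ** X j)))
     \<le> - \<kappa> * (norm (X i - X j))^2"
proof -
  define N where "N = real CARD('k)"
  have N0: "N > 0" by (simp add: N_def)
  define G where "G p = (\<kappa> / N) *\<^sub>R (\<Sum>k\<in>UNIV. inner (Y p) (Y k) *\<^sub>R (X k - X p ** transpose (X k) ** X p))" for p
  have self: "inner (X p) (G p) = 0" for p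
    by (simp add: G_def inner_sum_right inner_T_self[OF oX])
  have cross: "inner (X i) (G j) + inner (X j) (G i)
     = (\<kappa> / N) * (\<Sum>k\<in>UNIV. inner (Y j) (Y k) * inner (X i) (X k - X j ** transpose (X k) ** X j)
                   + inner (Y i) (Y k) * inner (X j) (X k - X i ** transpose (X k) ** X i))"
    by (simp add: G_def inner_sum_right sum.distrib distrib_left)
  have "(\<Sum>k\<in>UNIV. inner (Y j) (Y k) * inner (X i) (X k - X j ** transpose (X k) ** X j)
                   + inner (Y i) (Y k) * inner (X j) (X k - X i ** transpose (X k) ** X i))
        \<ge> (\<Sum>k\<in>(UNIV::'k set). (norm (X i - X j))^2)"
    by (intro sum_mono perk oX mx r5 coef_bounds[OF oY y5])
  then have "(\<Sum>k\<in>UNIV. inner (Y j) (Y k) * inner (X i) (X k - X j ** transpose (X k) ** X j)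
                   + inner (Y i) (Y k) * inner (X j) (X k - X i ** transpose (X k) ** X i))
        \<ge> N * (norm (X i - X j))^2" by (simp add: N_def)
  then have "inner (X i) (G j) + inner (X j) (G i) \<ge> (\<kappa> / N) * (N * (norm (X i - X j))^2)"
    unfolding cross using kp N0 by (intro mult_left_mono) auto
  also have "(\<kappa> / N) * (N * (norm (X i - X j))^2) = \<kappa> * (norm (X i - X j))^2" using N0 by simp
  finally have "inner (X i) (G j) + inner (X j) (G i) \<ge> \<kappa> * (norm (X i - X j))^2" .
  moreover have "inner (X i - X j) (G i - G j) = inner (X i) (G i) + inner (X j) (G j) - (inner (X i) (G j) + inner (X j) (G i))"
    by (simp add: inner_diff_left inner_diff_right)
  ultimately have "inner (X i - X j) (G i - G j) \<le> - \<kappa> * (norm (X i - X j))^2" using self by simp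
  then show ?thesis by (simp add: G_def N_def)
qed

lemma bb_mult: "bounded_bilinear (\<lambda>(A::real^'n^'n) (B::real^'n^'n). A ** B)"
  unfolding bilinear_conv_bounded_bilinear[symmetric] bilinear_def
  by (auto intro!: linearI simp: matrix_add_ldistrib matrix_add_rdistrib matrix_scalar_ac scalar_matrix_assoc)

lemma linear_transpose: "linear (transpose :: real^'n^'m \<Rightarrow> real^'m^'n)"
  by (auto intro!: linearI simp: transpose_add transpose_scalar)

lemma bl_transpose: "bounded_linear (transpose :: real^'n^'m \<Rightarrow> real^'m^'n)"
  using linear_transpose linear_conv_bounded_linear by blast

lemma deriv_transpose:
  "(f has_vector_derivative f') F \<Longrightarrow> ((\<lambda>t. transpose (f t)) has_vector_derivative transpose f') F"
  for f :: "real \<Rightarrow> real^'n^'m"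
  by (rule bounded_linear.has_vector_derivative[OF bl_transpose])

lemma deriv_mult:
  fixes f g :: "real \<Rightarrow> real^'n^'n"
  shows "(f has_vector_derivative f') (at t within S) \<Longrightarrow> (g has_vector_derivative g') (at t within S) \<Longrightarrow>
   ((\<lambda>x. f x ** g x) has_vector_derivative (f t ** g' + f' ** g t)) (at t within S)"
  using bounded_bilinear.has_vector_derivative[OF bb_mult] by blast

lemma deriv_inner_self:
  fixes f :: "real \<Rightarrow> 'a::real_inner"
  assumes "(f has_vector_derivative f') (at t within S)"
  shows "((\<lambda>x. inner (f x) (f x)) has_real_derivative 2 * inner (f t) f') (at t within S)"
proof -
  have "((\<lambda>x. inner (f x) (f x)) has_vector_derivative (inner (f t) f' + inner f' (f t))) (at t within S)"
    using bounded_bilinear.has_vector_derivative[OF bounded_bilinear_inner assms assms] by simp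
  then show ?thesis
    by (simp add: has_real_derivative_iff_has_vector_derivative inner_commute)
qed

lemma gronwall0:
  fixes f f' C :: "real \<Rightarrow> real"
  assumes der: "\<And>t. t \<ge> 0 \<Longrightarrow> (f has_real_derivative f' t) (at t within {0..})"
    and nn: "\<And>t. t \<ge> 0 \<Longrightarrow> f t \<ge> 0" and f0: "f 0 = 0"
    and Cc: "continuous_on {0..} C"
    and ineq: "\<And>t. t \<ge> 0 \<Longrightarrow> f' t \<le> C t * f t"
    and t0: "t \<ge> 0"
  shows "f t = 0"
proof (cases "t = 0")
  case True then show ?thesis using f0 by simp
next
  case False
  then have tp: "t > 0" using t0 by simp
  have "continuous_on {0..t} C" using Cc by (rule continuous_on_subset) auto
  then obtain x where "x \<in> {0..t}" "\<forall>y\<in>{0..t}. C y \<le> C x"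
    using continuous_attains_sup[of "{0..t}" C] tp by auto
  then obtain K where K: "\<And>s. s \<in> {0..t} \<Longrightarrow> C s \<le> K" by blast
  define g where "g s = exp (- (K * s)) * f s" for s
  have dg: "(g has_real_derivative exp (- (K * s)) * (f' s - K * f s)) (at s within {0..t})" if "s \<in> {0..t}" for s
  proof -
    have "(f has_real_derivative f' s) (at s within {0..t})"
      using der[of s] that by (auto intro: has_field_derivative_subset)
    then have "(g has_real_derivative exp (- (K * s)) * f' s + (exp (- (K * s)) * (-K)) * f s) (at s within {0..t})"
      unfolding g_def by (auto intro!: derivative_eq_intros)
    then show ?thesis by (simp add: algebra_simps)
  qed
  have "\<exists>x\<in>{0..t}. g t - g 0 = (\<lambda>h. (exp (- (K * x)) * (f' x - K * f x)) * h) (t - 0)"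
    using t0 dg by (intro mvt_very_simple) (auto simp: has_field_derivative_def)
  then obtain x where x: "x \<in> {0..t}" "g t - g 0 = (t - 0) * (exp (- (K * x)) * (f' x - K * f x))" by (auto simp: mult.commute)
  have "f' x - K * f x \<le> 0"
  proof -
    have "f' x \<le> C x * f x" using ineq x by auto
    also have "\<dots> \<le> K * f x" using K[OF x(1)] nn[of x] x by (intro mult_right_mono) auto
    finally show ?thesis by simp
  qed
  then have "(t - 0) * (exp (- (K * x)) * (f' x - K * f x)) \<le> 0"
    using t0 by (intro mult_nonneg_nonpos) (auto intro: mult_nonneg_nonpos)
  then have "g t \<le> 0" using x f0 by (simp add: g_def)
  then have "f t \<le> 0" by (simp add: g_def mult_le_0_iff)
  then show ?thesis using nn[OF t0] by simp
qed

lemma left_deriv_nonneg: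
  fixes \<phi> :: "real \<Rightarrow> real"
  assumes d: "(\<phi> has_real_derivative D) (at t within {0..})" and tp: "t > 0"
    and pt: "\<phi> t \<ge> 0" and ps: "\<And>s. 0 \<le> s \<Longrightarrow> s < t \<Longrightarrow> \<phi> s < 0"
  shows "D \<ge> 0"
proof -
  have "(\<phi> has_real_derivative D) (at t within {0..t})"
    using d by (rule has_field_derivative_subset) auto
  then have "((\<lambda>y. (\<phi> y - \<phi> t) / (y - t)) \<longlongrightarrow> D) (at t within {0..t})"
    by (simp add: has_field_derivative_iff)
  then have lim: "((\<lambda>y. (\<phi> y - \<phi> t) / (y - t)) \<longlongrightarrow> D) (at_left t)"
    using at_within_Icc_at_left[OF tp] by simp
  have ev: "eventually (\<lambda>y. 0 \<le> (\<phi> y - \<phi> t) / (y - t)) (at_left t)"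
    using eventually_at_left_real[OF tp]
  proof (rule eventually_mono)
    fix y assume "y \<in> {0<..<t}"
    then have "\<phi> y - \<phi> t < 0" "y - t < 0" using ps[of y] pt by auto
    then show "0 \<le> (\<phi> y - \<phi> t) / (y - t)" by (simp add: divide_nonpos_neg)
  qed
  show ?thesis using tendsto_lowerbound[OF lim ev] by simp
qed

lemma left_cont_le:
  fixes \<phi> :: "real \<Rightarrow> real"
  assumes c: "continuous (at t within {0..}) \<phi>" and tp: "t > 0"
    and ps: "\<And>s. 0 \<le> s \<Longrightarrow> s < t \<Longrightarrow> \<phi> s < 0"
  shows "\<phi> t \<le> 0"
proof -
  have "(\<phi> \<longlongrightarrow> \<phi> t) (at t within {0..})" using c by (simp add: continuous_within)
  then have "(\<phi> \<longlongrightarrow> \<phi> t) (at t within {0..t})" by (rule tendsto_within_subset) auto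
  then have lim: "(\<phi> \<longlongrightarrow> \<phi> t) (at_left t)" using at_within_Icc_at_left[OF tp] by simp
  have ev: "eventually (\<lambda>y. \<phi> y \<le> 0) (at_left t)"
    using eventually_at_left_real[OF tp] by (rule eventually_mono) (auto intro: less_imp_le ps)
  show ?thesis using tendsto_upperbound[OF lim ev] by simp
qed

lemma transpose_sum: "transpose (sum f S) = (\<Sum>k\<in>S. transpose (f k :: real^'n^'m))"
  by (induction S rule: infinite_finite_induct) (auto simp: transpose_add transpose_zero)

lemma mult_sum_right: "(A::real^'n^'n) ** sum f S = (\<Sum>k\<in>S. A ** f k)"
  by (induction S rule: infinite_finite_induct) (auto simp: matrix_add_ldistrib)

lemma mult_sum_left: "sum f S ** (A::real^'n^'n) = (\<Sum>k\<in>S. f k ** A)"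
  by (induction S rule: infinite_finite_induct) (auto simp: matrix_add_rdistrib)

lemma mult_scaleR_right: "(A::real^'n^'n) ** (c *\<^sub>R B) = c *\<^sub>R (A ** B)"
  by (simp add: matrix_scalar_ac scalar_matrix_assoc)

lemma mult_scaleR_left: "(c *\<^sub>R A) ** (B::real^'n^'n) = c *\<^sub>R (A ** B)"
  by (simp add: scalar_matrix_assoc)

lemma Qprime_identity:
  fixes X W :: "real^'n^'n"
  shows "transpose X ** (W - X ** transpose W ** X) + transpose (W - X ** transpose W ** X) ** X
    = - ((transpose X ** X - mat 1) ** (transpose W ** X) + transpose X ** W ** (transpose X ** X - mat 1))"
  by (simp add: matrix_sub_ldistrib matrix_sub_rdistrib transpose_diff matrix_transpose_mul matrix_mul_assoc
      algebra_simps)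

lemma orth_pres:
  fixes X :: "real \<Rightarrow> real^'n^'n" and W :: "'k::finite \<Rightarrow> real \<Rightarrow> real^'n^'n" and a :: "'k \<Rightarrow> real \<Rightarrow> real"
  assumes der: "\<And>t. t \<ge> 0 \<Longrightarrow> (X has_vector_derivative
        (\<Sum>k\<in>UNIV. a k t *\<^sub>R (W k t - X t ** transpose (W k t) ** X t))) (at t within {0..})"
    and cW: "\<And>k. continuous_on {0..} (W k)" and ca: "\<And>k. continuous_on {0..} (a k)"
    and init: "transpose (X 0) ** X 0 = mat 1"
    and t0: "t \<ge> 0"
  shows "transpose (X t) ** X t = mat 1"
proof -
  define D where "D t = (\<Sum>k\<in>UNIV. a k t *\<^sub>R (W k t - X t ** transpose (W k t) ** X t))" for t
  define Q where "Q t = transpose (X t) ** X t - mat 1" for t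
  define M where "M k t = transpose (W k t) ** X t" for k t
  define f where "f t = inner (Q t) (Q t)" for t
  define C where "C t = 4 * (\<Sum>k\<in>UNIV. \<bar>a k t\<bar> * norm (W k t) * norm (X t))" for t
  have cX: "continuous_on {0..} X"
    using der by (intro continuous_on_vector_derivative) (auto simp: D_def)
  have dQ: "(Q has_vector_derivative (transpose (X s) ** D s + transpose (D s) ** X s)) (at s within {0..})"
    if "s \<ge> 0" for s
  proof -
    have "((\<lambda>x. transpose (X x) ** X x) has_vector_derivative (transpose (X s) ** D s + transpose (D s) ** X s)) (at s within {0..})"
      using deriv_mult[OF deriv_transpose[OF der[OF that]] der[OF that]] by (simp add: D_def)
    then show ?thesis unfolding Q_def
      using has_vector_derivative_diff[OF _ has_vector_derivative_const] by fastforce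
  qed
  have Qid: "transpose (X s) ** D s + transpose (D s) ** X s
      = (\<Sum>k\<in>UNIV. a k s *\<^sub>R (- (Q s ** M k s + transpose (M k s) ** Q s)))" for s
  proof -
    have "transpose (X s) ** D s + transpose (D s) ** X s
       = (\<Sum>k\<in>UNIV. a k s *\<^sub>R (transpose (X s) ** (W k s - X s ** transpose (W k s) ** X s)
            + transpose (W k s - X s ** transpose (W k s) ** X s) ** X s))"
      by (simp add: D_def mult_sum_right mult_sum_left transpose_sum transpose_scalar mult_scaleR_right
          mult_scaleR_left sum.distrib scaleR_add_right)
    also have "\<dots> = (\<Sum>k\<in>UNIV. a k s *\<^sub>R (- (Q s ** M k s + transpose (M k s) ** Q s)))"
      by (simp add: Qprime_identity Q_def M_def matrix_transpose_mul)
    finally show ?thesis .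
  qed
  have df: "(f has_real_derivative 2 * inner (Q s) (transpose (X s) ** D s + transpose (D s) ** X s)) (at s within {0..})"
    if "s \<ge> 0" for s
    unfolding f_def by (rule deriv_inner_self[OF dQ[OF that]])
  have bound: "2 * inner (Q s) (transpose (X s) ** D s + transpose (D s) ** X s) \<le> C s * f s" if "s \<ge> 0" for s
  proof -
    have trm: "a k s * inner (Q s) (- (Q s ** M k s + transpose (M k s) ** Q s))
        \<le> \<bar>a k s\<bar> * (2 * (norm (W k s) * norm (X s)) * inner (Q s) (Q s))" for k
    proof -
      have nM: "norm (M k s) \<le> norm (W k s) * norm (X s)"
        using norm_mult_le[of "transpose (W k s)" "X s"] by (simp add: M_def norm_transpose)
      have n1: "\<bar>inner (Q s) (Q s ** M k s)\<bar> \<le> norm (Q s) * (norm (Q s) * norm (M k s))"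
        using Cauchy_Schwarz_ineq2[of "Q s" "Q s ** M k s"]
          mult_left_mono[OF norm_mult_le[of "Q s" "M k s"] norm_ge_zero[of "Q s"]]
        by (rule order_trans)
      have n2: "\<bar>inner (Q s) (transpose (M k s) ** Q s)\<bar> \<le> norm (Q s) * (norm (M k s) * norm (Q s))"
        using Cauchy_Schwarz_ineq2[of "Q s" "transpose (M k s) ** Q s"]
          mult_left_mono[OF norm_mult_le[of "transpose (M k s)" "Q s"] norm_ge_zero[of "Q s"]]
        unfolding norm_transpose by (rule order_trans)
      have e1: "inner (Q s) (- (Q s ** M k s + transpose (M k s) ** Q s))
          = - (inner (Q s) (Q s ** M k s) + inner (Q s) (transpose (M k s) ** Q s))"
        by (simp only: inner_minus_right inner_add_right)
      have e2: "norm (Q s) * (norm (Q s) * norm (M k s)) + norm (Q s) * (norm (M k s) * norm (Q s))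
          = 2 * (norm (M k s) * (norm (Q s))^2)" by (simp add: power2_eq_square)
      have "\<bar>inner (Q s) (- (Q s ** M k s + transpose (M k s) ** Q s))\<bar>
          \<le> \<bar>inner (Q s) (Q s ** M k s)\<bar> + \<bar>inner (Q s) (transpose (M k s) ** Q s)\<bar>"
        unfolding e1 abs_minus_cancel by (rule abs_triangle_ineq)
      also have "\<dots> \<le> 2 * (norm (M k s) * (norm (Q s))^2)" using n1 n2 e2 by linarith
      finally have "\<bar>inner (Q s) (- (Q s ** M k s + transpose (M k s) ** Q s))\<bar> \<le> 2 * (norm (M k s) * (norm (Q s))^2)" .
      also have "\<dots> \<le> 2 * ((norm (W k s) * norm (X s)) * (norm (Q s))^2)"
        using nM by (intro mult_left_mono mult_right_mono) auto
      finally have "\<bar>inner (Q s) (- (Q s ** M k s + transpose (M k s) ** Q s))\<bar>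
          \<le> 2 * (norm (W k s) * norm (X s)) * inner (Q s) (Q s)"
        by (simp add: power2_norm_eq_inner mult_ac)
      then have "\<bar>a k s * inner (Q s) (- (Q s ** M k s + transpose (M k s) ** Q s))\<bar>
          \<le> \<bar>a k s\<bar> * (2 * (norm (W k s) * norm (X s)) * inner (Q s) (Q s))"
        unfolding abs_mult by (intro mult_left_mono) auto
      then show ?thesis by (simp add: abs_le_iff)
    qed
    have "2 * inner (Q s) (transpose (X s) ** D s + transpose (D s) ** X s)
       = 2 * (\<Sum>k\<in>UNIV. a k s * inner (Q s) (- (Q s ** M k s + transpose (M k s) ** Q s)))"
      by (simp only: Qid inner_sum_right inner_scaleR_right)
    also have "\<dots> \<le> 2 * (\<Sum>k\<in>UNIV. \<bar>a k s\<bar> * (2 * (norm (W k s) * norm (X s)) * inner (Q s) (Q s)))"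
      by (intro mult_left_mono sum_mono trm) auto
    also have "\<dots> = C s * f s"
      by (simp add: C_def f_def sum_distrib_left sum_distrib_right mult_ac)
    finally show ?thesis .
  qed
  have cC: "continuous_on {0..} C"
    unfolding C_def using cW ca cX
    by (intro continuous_intros) auto
  have "f t = 0"
    by (rule gronwall0[where f = f and f' = "\<lambda>s. 2 * inner (Q s) (transpose (X s) ** D s + transpose (D s) ** X s)"
          and C = C, OF df _ _ cC bound t0]) (auto simp: f_def Q_def init)
  then show ?thesis by (simp add: f_def Q_def)
qed

lemma comparison:
  fixes h h' :: "'p::finite \<Rightarrow> real \<Rightarrow> real" and B :: real
  assumes der: "\<And>p t. t \<ge> 0 \<Longrightarrow> (h p has_real_derivative h' p t) (at t within {0..})"
    and init: "\<And>p. h p 0 < B"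
    and step: "\<And>p t. t > 0 \<Longrightarrow> (\<And>q. h q t \<le> B) \<Longrightarrow> (\<And>q. h q t \<le> h p t) \<Longrightarrow> h' p t \<le> 0"
    and t0: "t \<ge> 0"
  shows "h p t < B"
proof -
  define M where "M = Max (range (\<lambda>q. h q 0))"
  have MB: "M < B" unfolding M_def using init by (subst Max_less_iff) auto
  have hM: "h q 0 \<le> M" for q unfolding M_def by (rule Max_ge) auto
  define \<epsilon> where "\<epsilon> = (B - M) / 2"
  have ep: "\<epsilon> > 0" using MB by (simp add: \<epsilon>_def)
  define bnd where "bnd s = B - \<epsilon> * exp (- s)" for s
  have dbnd: "(bnd has_real_derivative \<epsilon> * exp (- s)) (at s within {0..})" for s
    unfolding bnd_def by (auto intro!: derivative_eq_intros)
  have bndB: "bnd s < B" for s using ep by (simp add: bnd_def)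
  have ch: "continuous (at s within {0..}) (h q)" if "s \<ge> 0" for q s
    using der[OF that] by (rule DERIV_continuous)
  have chq: "continuous_on {0..} (h q)" for q
    using ch by (simp add: continuous_on_eq_continuous_within)
  have cb: "continuous_on {0..} bnd" unfolding bnd_def by (intro continuous_intros)
  have claim: "\<forall>s\<ge>0. \<forall>q. h q s < bnd s"
  proof (rule ccontr)
    assume neg: "\<not> (\<forall>s\<ge>0. \<forall>q. h q s < bnd s)"
    define S where "S = {s \<in> {0..}. \<exists>q. bnd s \<le> h q s}"
    have Sne: "S \<noteq> {}" using neg by (auto simp: S_def not_less)
    have SU: "S = (\<Union>q\<in>UNIV. {s \<in> {0..}. bnd s \<le> h q s})" by (auto simp: S_def)
    have "closed S" unfolding SU
      by (intro closed_UN ballI continuous_on_closed_Collect_le cb chq closed_atLeast) simp_all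
    moreover have bb: "bdd_below S" by (rule bdd_belowI[of _ 0]) (auto simp: S_def)
    ultimately have t1S: "Inf S \<in> S" using Sne by (intro closed_contains_Inf)
    define t1 where "t1 = Inf S"
    have t1ge: "t1 \<ge> 0" using t1S by (simp add: S_def t1_def)
    have before: "h q s < bnd s" if "0 \<le> s" "s < t1" for q s
    proof (rule ccontr)
      assume "\<not> h q s < bnd s"
      then have "s \<in> S" using that by (auto simp: S_def not_less)
      then have "t1 \<le> s" unfolding t1_def using bb by (rule cInf_lower)
      then show False using that by simp
    qed
    obtain p0 where p0: "bnd t1 \<le> h p0 t1" using t1S by (auto simp: S_def t1_def)
    have t1p: "t1 > 0"
    proof (rule ccontr)
      assume "\<not> t1 > 0"
      then have "t1 = 0" using t1ge by simp
      then have "bnd 0 \<le> h p0 0" using p0 by simp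
      moreover have "h p0 0 \<le> M" by (rule hM)
      moreover have "bnd 0 = M + \<epsilon>" by (simp add: bnd_def \<epsilon>_def field_simps)
      ultimately show False using ep by simp
    qed
    have allle: "h q t1 \<le> bnd t1" for q
    proof -
      have "(\<lambda>s. h q s - bnd s) t1 \<le> 0"
      proof (rule left_cont_le[OF _ t1p])
        show "continuous (at t1 within {0..}) (\<lambda>s. h q s - bnd s)"
          using ch[OF t1ge] cb t1ge by (intro continuous_intros) (auto simp: continuous_on_eq_continuous_within)
        show "\<And>s. 0 \<le> s \<Longrightarrow> s < t1 \<Longrightarrow> h q s - bnd s < 0" using before by simp
      qed
      then show ?thesis by simp
    qed
    have "h' p0 t1 \<le> 0"
    proof (rule step[OF t1p])
      show "\<And>q. h q t1 \<le> B" using allle bndB by (meson less_imp_le order_trans)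
      show "\<And>q. h q t1 \<le> h p0 t1" using allle p0 by (meson order_trans)
    qed
    moreover have "h' p0 t1 - \<epsilon> * exp (- t1) \<ge> 0"
    proof (rule left_deriv_nonneg[OF _ t1p])
      show "((\<lambda>s. h p0 s - bnd s) has_real_derivative h' p0 t1 - \<epsilon> * exp (- t1)) (at t1 within {0..})"
        using der[OF t1ge] dbnd by (intro derivative_intros)
      show "0 \<le> h p0 t1 - bnd t1" using p0 by simp
      show "\<And>s. 0 \<le> s \<Longrightarrow> s < t1 \<Longrightarrow> h p0 s - bnd s < 0" using before by simp
    qed
    moreover have "\<epsilon> * exp (- t1) > 0" using ep by simp
    ultimately show False by simp
  qed
  then show ?thesis using t0 bndB[of t] by (meson order_less_trans)
qed

lemma pairs_finite: "finite {f i j | i j. True}" for f :: "'k::finite \<Rightarrow> 'k \<Rightarrow> 'b"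
proof -
  have "{f i j | i j. True} = (\<lambda>p. f (fst p) (snd p)) ` UNIV"
    by (auto simp: image_iff) (metis fst_conv snd_conv)
  then show ?thesis by simp
qed

lemma Max_pairs_le:
  fixes f :: "'k::finite \<Rightarrow> 'k \<Rightarrow> real"
  assumes "\<And>i j. f i j \<le> c"
  shows "Max {f i j | i j. True} \<le> c"
  using assms by (subst Max_le_iff[OF pairs_finite]) auto

lemma Max_pairs_ge:
  fixes f :: "'k::finite \<Rightarrow> 'k \<Rightarrow> real"
  shows "f i j \<le> Max {f i j | i j. True}"
  by (rule Max_ge[OF pairs_finite]) auto

lemma alpha_lt:
  assumes m1: "1 \<le> m" and mn: "m \<le> (n::real)"
  shows "alpha_mn m n < 1/5"
proof -
  define A where "A = 12*n+27"
  define c where "c = 4/5*(4*n+3)"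
  have n0: "n \<ge> 1" using m1 mn by simp
  have Bb: "24*m*(3*n+4) \<le> 24*n*(3*n+4)" using mn n0 by (intro mult_right_mono) auto
  have ex: "(A + c)^2 - A^2 - 24*n*(3*n+4) = 376/25*n^2 + 3744/25*n + 3384/25"
    by (simp add: A_def c_def power2_eq_square algebra_simps)
  have "n^2 \<ge> 0" by simp
  then have lt: "A^2 + 24*m*(3*n+4) < (A + c)^2" using ex Bb n0 by linarith
  have "4/5*(4*n+3) \<ge> 0" using n0 by simp
  then have Ac: "A + c > 0" using n0 unfolding A_def c_def by linarith
  have "sqrt (A^2 + 24*m*(3*n+4)) < sqrt ((A + c)^2)" using lt by (rule real_sqrt_less_mono)
  also have "\<dots> = A + c" using Ac by simp
  finally have s: "sqrt (A^2 + 24*m*(3*n+4)) - A < c" by simp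
  have d: "4*(4*n+3) > 0" using n0 by simp
  have "alpha_mn m n = (sqrt (A^2 + 24*m*(3*n+4)) - A) / (4*(4*n+3))"
    by (simp add: alpha_mn_def A_def)
  also have "\<dots> < c / (4*(4*n+3))" using s d by (intro divide_strict_right_mono)
  also have "c / (4*(4*n+3)) = 1/5" using d by (simp add: c_def)
  finally show ?thesis .
qed

lemma exp_decay:
  assumes "\<kappa> > (0::real)"
  shows "((\<lambda>t. exp (- (\<kappa> * t))) \<longlongrightarrow> 0) at_top"
proof -
  have "filterlim (\<lambda>t. \<kappa> * t) at_top at_top"
    using assms by (intro filterlim_tendsto_pos_mult_at_top[OF tendsto_const] filterlim_ident)
  then have "filterlim (\<lambda>t. - (\<kappa> * t)) at_bot at_top"
    by (simp add: filterlim_uminus_at_bot)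
  then show ?thesis by (rule filterlim_compose[OF exp_at_bot])
qed

lemma deriv_h:
  fixes X :: "'k \<Rightarrow> real \<Rightarrow> real^'n^'n"
  assumes "(X i has_vector_derivative Di) (at t within S)" "(X j has_vector_derivative Dj) (at t within S)"
  shows "((\<lambda>s. exp (\<kappa> * s) * inner (X i s - X j s) (X i s - X j s)) has_real_derivative
      exp (\<kappa> * t) * \<kappa> * inner (X i t - X j t) (X i t - X j t)
      + exp (\<kappa> * t) * (2 * inner (X i t - X j t) (Di - Dj))) (at t within S)"
proof -
  have "((\<lambda>s. X i s - X j s) has_vector_derivative Di - Dj) (at t within S)"
    using assms by (rule has_vector_derivative_diff)
  then have d: "((\<lambda>s. inner (X i s - X j s) (X i s - X j s)) has_real_derivative 2 * inner (X i t - X j t) (Di - Dj)) (at t within S)"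
    by (rule deriv_inner_self)
  have "((\<lambda>s. exp (\<kappa> * s) * inner (X i s - X j s) (X i s - X j s)) has_real_derivative
      exp (\<kappa> * t) * (2 * inner (X i t - X j t) (Di - Dj)) + exp (\<kappa> * t) * \<kappa> * inner (X i t - X j t) (X i t - X j t)) (at t within S)"
    using d by (auto intro!: derivative_eq_intros)
  then show ?thesis by (simp add: algebra_simps)
qed

lemma diamD_eq: "diamD X = Max {norm (X i - X j) | i j. True}"
  by (simp add: diamD_def frob_norm_eq)

lemma devS_eq: "devS (X::'k::finite \<Rightarrow> real^'n^'n) = Max {\<bar>real CARD('n) - inner (X i) (X j)\<bar> | i j. True}"
  by (simp add: devS_def frob_inner_eq)

lemma diamD_nn: "diamD X \<ge> 0"
  unfolding diamD_eq using Max_pairs_ge[of "\<lambda>i j. norm (X i - X j)" undefined undefined]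
  by (meson norm_ge_zero order_trans)

lemma devS_nn: "devS (X::'k::finite \<Rightarrow> real^'n^'n) \<ge> 0"
  unfolding devS_eq using Max_pairs_ge[of "\<lambda>i j. \<bar>real CARD('n) - inner (X i) (X j)\<bar>" undefined undefined]
  by (meson abs_ge_zero order_trans)

lemma sq_bound:
  assumes "exp (\<kappa> * t) * inner x x \<le> 1/25" "\<kappa> > 0" "t \<ge> (0::real)"
  shows "norm x \<le> 1/5"
proof -
  have "exp (\<kappa> * t) \<ge> 1" using assms by simp
  then have "inner x x \<le> exp (\<kappa> * t) * inner x x"
    using mult_right_mono[of 1 "exp (\<kappa> * t)" "inner x x"] by simp
  then have "inner x x \<le> 1/25" using assms(1) by simp
  then have "norm x \<le> sqrt (1/25)" by (simp add: norm_eq_sqrt_inner)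
  also have "sqrt (1/25) = (1/5::real)" by (simp add: real_sqrt_divide)
  finally show ?thesis .
qed

lemma max_cmp:
  assumes "exp (\<kappa> * t) * inner x x \<le> exp (\<kappa> * t) * inner y y"
  shows "norm x \<le> norm y"
proof -
  have "inner x x \<le> inner y y" using assms by simp
  then show ?thesis by (simp add: norm_eq_sqrt_inner)
qed

lemma step_case:
  fixes X :: "'k::finite \<Rightarrow> real \<Rightarrow> real^'n^'n" and Y :: "'k \<Rightarrow> real \<Rightarrow> real^'m^'m"
  assumes oX: "\<And>k. orthogonal_matrix (X k t)" and oY: "\<And>k. orthogonal_matrix (Y k t)"
    and kp: "\<kappa> > 0" and t0: "t \<ge> 0"
    and mx: "\<And>k. exp (\<kappa> * t) * inner (X k t - X i t) (X k t - X i t) \<le> exp (\<kappa> * t) * inner (X i t - X j t) (X i t - X j t)"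
    and bX: "exp (\<kappa> * t) * inner (X i t - X j t) (X i t - X j t) \<le> 1/25"
    and bY: "\<And>k l. exp (\<kappa> * t) * inner (Y k t - Y l t) (Y k t - Y l t) \<le> 1/25"
  shows "exp (\<kappa> * t) * \<kappa> * inner (X i t - X j t) (X i t - X j t)
      + exp (\<kappa> * t) * (2 * inner (X i t - X j t)
          ((\<kappa> / real CARD('k)) *\<^sub>R (\<Sum>k\<in>UNIV. inner (Y i t) (Y k t) *\<^sub>R (X k t - X i t ** transpose (X k t) ** X i t))
         - (\<kappa> / real CARD('k)) *\<^sub>R (\<Sum>k\<in>UNIV. inner (Y j t) (Y k t) *\<^sub>R (X k t - X j t ** transpose (X k t) ** X j t)))) \<le> 0"
proof -
  have K: "inner (X i t - X j t)
          ((\<kappa> / real CARD('k)) *\<^sub>R (\<Sum>k\<in>UNIV. inner (Y i t) (Y k t) *\<^sub>R (X k t - X i t ** transpose (X k t) ** X i t))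
         - (\<kappa> / real CARD('k)) *\<^sub>R (\<Sum>k\<in>UNIV. inner (Y j t) (Y k t) *\<^sub>R (X k t - X j t ** transpose (X k t) ** X j t)))
      \<le> - \<kappa> * (norm (X i t - X j t))^2"
    by (rule key[where X = "\<lambda>k. X k t" and Y = "\<lambda>k. Y k t" and i = i and j = j and \<kappa> = \<kappa>])
      (rule oX oY kp max_cmp[OF mx] sq_bound[OF bX kp t0] sq_bound[OF bY kp t0])+
  define r where "r = (norm (X i t - X j t))^2"
  define Iv where "Iv = inner (X i t - X j t)
          ((\<kappa> / real CARD('k)) *\<^sub>R (\<Sum>k\<in>UNIV. inner (Y i t) (Y k t) *\<^sub>R (X k t - X i t ** transpose (X k t) ** X i t))
         - (\<kappa> / real CARD('k)) *\<^sub>R (\<Sum>k\<in>UNIV. inner (Y j t) (Y k t) *\<^sub>R (X k t - X j t ** transpose (X k t) ** X j t)))"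
  have K': "Iv \<le> - \<kappa> * r" using K by (simp only: Iv_def r_def)
  have rr: "inner (X i t - X j t) (X i t - X j t) = r" by (simp add: r_def power2_norm_eq_inner)
  have r0: "r \<ge> 0" by (simp add: r_def)
  have e0: "exp (\<kappa> * t) > 0" by simp
  have "exp (\<kappa> * t) * \<kappa> * r + exp (\<kappa> * t) * (2 * (- \<kappa> * r)) = - (exp (\<kappa> * t) * \<kappa> * r)"
    by (simp add: algebra_simps)
  moreover have "exp (\<kappa> * t) * \<kappa> * r \<ge> 0" using r0 kp by simp
  moreover have "exp (\<kappa> * t) * (2 * Iv) \<le> exp (\<kappa> * t) * (2 * (- \<kappa> * r))"
    using K' e0 by (intro mult_left_mono) auto
  ultimately show ?thesis unfolding rr Iv_def[symmetric] by linarith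
qed

lemma sq5: "norm x < 1/5 \<Longrightarrow> inner x x < (1/25::real)" for x :: "'a::real_inner"
proof -
  assume that: "norm x < 1/5"
  have "(norm x)^2 < (1/5)^2" using that by (intro power_strict_mono) auto
  moreover have "(1/5::real)^2 = 1/25" by (simp add: power2_eq_square)
  ultimately show ?thesis by (simp only: power2_norm_eq_inner)
qed

lemma dec_lemma:
  fixes a \<kappa> t :: real
  assumes that: "exp (\<kappa> * t) * a < 1/25"
  shows "a \<le> exp (- (\<kappa> * t)) / 25"
proof -
  have le: "exp (- (\<kappa> * t)) * (exp (\<kappa> * t) * a) \<le> exp (- (\<kappa> * t)) * (1/25)"
    using that by (intro mult_left_mono) auto
  have one: "exp (- (\<kappa> * t)) * exp (\<kappa> * t) = 1" by (simp flip: exp_add)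
  have eq: "exp (- (\<kappa> * t)) * (exp (\<kappa> * t) * a) = a"
    by (simp only: mult.assoc[symmetric] one mult_1)
  have "a \<le> exp (- (\<kappa> * t)) * (1/25)" using le eq by linarith
  then show ?thesis by simp
qed

theorem theoremC1:
  fixes U :: "'k::finite \<Rightarrow> real \<Rightarrow> real^'n::finite^'n"
    and V :: "'k \<Rightarrow> real \<Rightarrow> real^'m::finite^'m"
    and \<kappa> :: real
  assumes "CARD('m) \<le> CARD('n)"
    and "\<kappa> > 0"
    and "DSOM_solution \<kappa> U V"
    and "\<forall>j. SO_mat (U j 0) \<and> SO_mat (V j 0)"
    and "lyapL U V 0 < alpha_mn (real CARD('m)) (real CARD('n))"
  shows "((\<lambda>t. lyapL U V t) \<longlongrightarrow> 0) at_top"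
proof -
  note kp = assms(2)
  define DU where "DU j t = (\<kappa> / real CARD('k)) *\<^sub>R (\<Sum>k\<in>UNIV. inner (V j t) (V k t) *\<^sub>R
      (U k t - U j t ** transpose (U k t) ** U j t))" for j t
  define DV where "DV j t = (\<kappa> / real CARD('k)) *\<^sub>R (\<Sum>k\<in>UNIV. inner (U j t) (U k t) *\<^sub>R
      (V k t - V j t ** transpose (V k t) ** V j t))" for j t
  have dU: "(U j has_vector_derivative DU j t) (at t within {0..})" if "t \<ge> 0" for j t
    using assms(3) that by (simp add: DSOM_solution_def frob_inner_eq DU_def)
  have dV: "(V j has_vector_derivative DV j t) (at t within {0..})" if "t \<ge> 0" for j t
    using assms(3) that by (simp add: DSOM_solution_def frob_inner_eq DV_def)
  have cU: "continuous_on {0..} (U k)" for k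
    by (rule continuous_on_vector_derivative[of "{0..}" "U k" "DU k"]) (use dU in auto)
  have cV: "continuous_on {0..} (V k)" for k
    by (rule continuous_on_vector_derivative[of "{0..}" "V k" "DV k"]) (use dV in auto)
  have oU: "orthogonal_matrix (U j t)" if t: "t \<ge> 0" for j t
  proof -
    have "transpose (U j t) ** U j t = mat 1"
    proof (rule orth_pres[where X = "U j" and W = U and a = "\<lambda>k s. \<kappa> / real CARD('k) * inner (V j s) (V k s)", OF _ cU _ _ t])
      show "(U j has_vector_derivative (\<Sum>k\<in>UNIV. (\<kappa> / real CARD('k) * inner (V j s) (V k s)) *\<^sub>R
          (U k s - U j s ** transpose (U k s) ** U j s))) (at s within {0..})" if "0 \<le> s" for s
        using dU[OF that, of j] by (simp add: DU_def scaleR_sum_right)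
      show "continuous_on {0..} (\<lambda>s. \<kappa> / real CARD('k) * inner (V j s) (V k s))" for k
        using cV by (intro continuous_intros) auto
      show "transpose (U j 0) ** U j 0 = mat 1" using assms(4) by (simp add: SO_mat_def orth_tt)
    qed
    then show ?thesis by (simp add: orthogonal_matrix)
  qed
  have oV: "orthogonal_matrix (V j t)" if t: "t \<ge> 0" for j t
  proof -
    have "transpose (V j t) ** V j t = mat 1"
    proof (rule orth_pres[where X = "V j" and W = V and a = "\<lambda>k s. \<kappa> / real CARD('k) * inner (U j s) (U k s)", OF _ cV _ _ t])
      show "(V j has_vector_derivative (\<Sum>k\<in>UNIV. (\<kappa> / real CARD('k) * inner (U j s) (U k s)) *\<^sub>R
          (V k s - V j s ** transpose (V k s) ** V j s))) (at s within {0..})" if "0 \<le> s" for s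
        using dV[OF that, of j] by (simp add: DV_def scaleR_sum_right)
      show "continuous_on {0..} (\<lambda>s. \<kappa> / real CARD('k) * inner (U j s) (U k s))" for k
        using cU by (intro continuous_intros) auto
      show "transpose (V j 0) ** V j 0 = mat 1" using assms(4) by (simp add: SO_mat_def orth_tt)
    qed
    then show ?thesis by (simp add: orthogonal_matrix)
  qed
  have L0: "lyapL U V 0 < 1/5"
    using assms(5) alpha_lt[of "real CARD('m)" "real CARD('n)"] assms(1) by simp
  have nn: "diamD (\<lambda>j. U j t) \<ge> 0" "diamD (\<lambda>j. V j t) \<ge> 0" "devS (\<lambda>j. U j t) \<ge> 0" "devS (\<lambda>j. V j t) \<ge> 0" for t
    by (rule diamD_nn devS_nn)+
  have iU: "norm (U i 0 - U j 0) < 1/5" for i j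
  proof -
    have "norm (U i 0 - U j 0) \<le> diamD (\<lambda>j. U j 0)"
      unfolding diamD_eq by (rule Max_pairs_ge[of "\<lambda>i j. norm (U i 0 - U j 0)"])
    then show ?thesis using L0 nn[of 0] unfolding lyapL_def by linarith
  qed
  have iV: "norm (V i 0 - V j 0) < 1/5" for i j
  proof -
    have "norm (V i 0 - V j 0) \<le> diamD (\<lambda>j. V j 0)"
      unfolding diamD_eq by (rule Max_pairs_ge[of "\<lambda>i j. norm (V i 0 - V j 0)"])
    then show ?thesis using L0 nn[of 0] unfolding lyapL_def by linarith
  qed
  define h where "h p t = (if snd (snd p)
      then exp (\<kappa> * t) * inner (U (fst p) t - U (fst (snd p)) t) (U (fst p) t - U (fst (snd p)) t)
      else exp (\<kappa> * t) * inner (V (fst p) t - V (fst (snd p)) t) (V (fst p) t - V (fst (snd p)) t))"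
    for p :: "'k \<times> 'k \<times> bool" and t
  define h' where "h' p t = (if snd (snd p)
      then exp (\<kappa> * t) * \<kappa> * inner (U (fst p) t - U (fst (snd p)) t) (U (fst p) t - U (fst (snd p)) t)
        + exp (\<kappa> * t) * (2 * inner (U (fst p) t - U (fst (snd p)) t) (DU (fst p) t - DU (fst (snd p)) t))
      else exp (\<kappa> * t) * \<kappa> * inner (V (fst p) t - V (fst (snd p)) t) (V (fst p) t - V (fst (snd p)) t)
        + exp (\<kappa> * t) * (2 * inner (V (fst p) t - V (fst (snd p)) t) (DV (fst p) t - DV (fst (snd p)) t)))"
    for p :: "'k \<times> 'k \<times> bool" and t
  have hT: "h (i, j, True) = (\<lambda>t. exp (\<kappa> * t) * inner (U i t - U j t) (U i t - U j t))" for i j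
    by (simp add: h_def fun_eq_iff)
  have hF: "h (i, j, False) = (\<lambda>t. exp (\<kappa> * t) * inner (V i t - V j t) (V i t - V j t))" for i j
    by (simp add: h_def fun_eq_iff)
  have h'T: "h' (i, j, True) t = exp (\<kappa> * t) * \<kappa> * inner (U i t - U j t) (U i t - U j t)
        + exp (\<kappa> * t) * (2 * inner (U i t - U j t) (DU i t - DU j t))" for i j t
    by (simp add: h'_def)
  have h'F: "h' (i, j, False) t = exp (\<kappa> * t) * \<kappa> * inner (V i t - V j t) (V i t - V j t)
        + exp (\<kappa> * t) * (2 * inner (V i t - V j t) (DV i t - DV j t))" for i j t
    by (simp add: h'_def)
  have der: "(h p has_real_derivative h' p t) (at t within {0..})" if "t \<ge> 0" for p t
  proof -
    obtain i j b where p: "p = (i, j, b)" by (cases p) auto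
    show ?thesis
    proof (cases b)
      case True
      then have pp: "p = (i, j, True)" using p by simp
      show ?thesis unfolding pp hT h'T
        by (rule deriv_h[where X = U and i = i and j = j and \<kappa> = \<kappa>, OF dU[OF that] dU[OF that]])
    next
      case False
      then have pp: "p = (i, j, False)" using p by simp
      show ?thesis unfolding pp hF h'F
        by (rule deriv_h[where X = V and i = i and j = j and \<kappa> = \<kappa>, OF dV[OF that] dV[OF that]])
    qed
  qed
  have init: "h p 0 < 1/25" for p
  proof -
    obtain i j b where p: "p = (i, j, b)" by (cases p) auto
    show ?thesis
      using sq5[OF iU[of i j]] sq5[OF iV[of i j]] by (cases b) (simp_all add: p hT hF)
  qed
  have step: "h' p t \<le> 0" if tp: "t > 0" and allB: "\<And>q. h q t \<le> 1/25" and mx: "\<And>q. h q t \<le> h p t" for p t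
  proof -
    have t0: "t \<ge> 0" using tp by simp
    obtain i j b where p: "p = (i, j, b)" by (cases p) auto
    show ?thesis
    proof (cases b)
      case True
      then have pp: "p = (i, j, True)" using p by simp
      show ?thesis unfolding pp h'T DU_def
      proof (rule step_case[where X = U and Y = V, OF oU[OF t0] oV[OF t0] kp t0])
        show "exp (\<kappa> * t) * inner (U k t - U i t) (U k t - U i t) \<le> exp (\<kappa> * t) * inner (U i t - U j t) (U i t - U j t)" for k
          using mx[of "(k, i, True)"] by (simp add: pp hT)
        show "exp (\<kappa> * t) * inner (U i t - U j t) (U i t - U j t) \<le> 1/25"
          using allB[of "(i, j, True)"] by (simp add: hT)
        show "exp (\<kappa> * t) * inner (V k t - V l t) (V k t - V l t) \<le> 1/25" for k l
          using allB[of "(k, l, False)"] by (simp add: hF)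
      qed
    next
      case False
      then have pp: "p = (i, j, False)" using p by simp
      show ?thesis unfolding pp h'F DV_def
      proof (rule step_case[where X = V and Y = U, OF oV[OF t0] oU[OF t0] kp t0])
        show "exp (\<kappa> * t) * inner (V k t - V i t) (V k t - V i t) \<le> exp (\<kappa> * t) * inner (V i t - V j t) (V i t - V j t)" for k
          using mx[of "(k, i, False)"] by (simp add: pp hF)
        show "exp (\<kappa> * t) * inner (V i t - V j t) (V i t - V j t) \<le> 1/25"
          using allB[of "(i, j, False)"] by (simp add: hF)
        show "exp (\<kappa> * t) * inner (U k t - U l t) (U k t - U l t) \<le> 1/25" for k l
          using allB[of "(k, l, True)"] by (simp add: hT)
      qed
    qed
  qed
  have comp: "h p t < 1/25" if "t \<ge> 0" for p t
    by (rule comparison[where h = h and h' = h', OF der init step that]) auto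
  define e where "e t = exp (- (\<kappa> * t))" for t
  have Lb: "lyapL U V t \<le> 2 * sqrt (e t / 25) + 2 * (e t / 50)" if t0: "t \<ge> 0" for t
  proof -
    have dUt: "inner (U i t - U j t) (U i t - U j t) \<le> e t / 25" for i j
      unfolding e_def using comp[OF t0, of "(i, j, True)"] unfolding hT by (rule dec_lemma)
    have dVt: "inner (V i t - V j t) (V i t - V j t) \<le> e t / 25" for i j
      unfolding e_def using comp[OF t0, of "(i, j, False)"] unfolding hF by (rule dec_lemma)
    have a1: "diamD (\<lambda>j. U j t) \<le> sqrt (e t / 25)"
      unfolding diamD_eq by (rule Max_pairs_le) (use dUt in \<open>auto simp: norm_eq_sqrt_inner\<close>)
    have a2: "diamD (\<lambda>j. V j t) \<le> sqrt (e t / 25)"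
      unfolding diamD_eq by (rule Max_pairs_le) (use dVt in \<open>auto simp: norm_eq_sqrt_inner\<close>)
    have a3: "devS (\<lambda>j. U j t) \<le> e t / 50"
      unfolding devS_eq
    proof (rule Max_pairs_le)
      fix i j
      have "(norm (U i t - U j t))^2 = 2 * real CARD('n) - 2 * inner (U i t) (U j t)"
        by (rule orth_dist[OF oU[OF t0] oU[OF t0]])
      moreover have "(norm (U i t - U j t))^2 \<le> e t / 25" using dUt[of i j] by (simp add: power2_norm_eq_inner)
      moreover have "(norm (U i t - U j t))^2 \<ge> 0" by simp
      ultimately show "\<bar>real CARD('n) - inner (U i t) (U j t)\<bar> \<le> e t / 50" by linarith
    qed
    have a4: "devS (\<lambda>j. V j t) \<le> e t / 50"
      unfolding devS_eq
    proof (rule Max_pairs_le)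
      fix i j
      have "(norm (V i t - V j t))^2 = 2 * real CARD('m) - 2 * inner (V i t) (V j t)"
        by (rule orth_dist[OF oV[OF t0] oV[OF t0]])
      moreover have "(norm (V i t - V j t))^2 \<le> e t / 25" using dVt[of i j] by (simp add: power2_norm_eq_inner)
      moreover have "(norm (V i t - V j t))^2 \<ge> 0" by simp
      ultimately show "\<bar>real CARD('m) - inner (V i t) (V j t)\<bar> \<le> e t / 50" by linarith
    qed
    show ?thesis unfolding lyapL_def using a1 a2 a3 a4 by linarith
  qed
  have lim: "((\<lambda>t. 2 * sqrt (e t / 25) + 2 * (e t / 50)) \<longlongrightarrow> 2 * sqrt (0 / 25) + 2 * (0 / 50)) at_top"
    unfolding e_def by (intro tendsto_intros exp_decay kp) simp_all
  show ?thesis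
  proof (rule tendsto_sandwich[OF _ _ tendsto_const])
    show "eventually (\<lambda>t. 0 \<le> lyapL U V t) at_top"
      using nn by (auto simp: lyapL_def intro!: always_eventually add_nonneg_nonneg)
    show "eventually (\<lambda>t. lyapL U V t \<le> 2 * sqrt (e t / 25) + 2 * (e t / 50)) at_top"
      unfolding eventually_at_top_linorder using Lb by blast
    show "((\<lambda>t. 2 * sqrt (e t / 25) + 2 * (e t / 50)) \<longlongrightarrow> 0) at_top" using lim by simp
  qed
qed

end
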